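(* Let $\Omega\subset\mathbb{R}^N$ be a bounded open connected set and let $w\in\mathrm{USC}(\overline{\Omega})$ be $\tilde{\mathcal{Q}}$-subharmonic in $\Omega$. If $w\le 0$ on $\partial\Omega$, then $w\le 0$ on $\Omega$.
   Context: $\mathcal{S}(N)$ is the space of real symmetric $N\times N$ matrices, $\lambda_N(A)$ the largest eigenvalue of $A$. $\tilde{\mathcal{Q}}:=\{(r,A)\in\mathbb{R}\times\mathcal{S}(N): r\le 0\text{ or }\lambda_N(A)\ge 0\}$. For $w$ defined near $x_0$, $J^+_{x_0}w:=\{(\varphi(x_0),D^2\varphi(x_0)):\varphi$ is $C^2$ near $x_0$, $w\le\varphi$ near $x_0$, $w(x_0)=\varphi(x_0)\}$. A function $w\in\mathrm{USC}(\Omega)$ (upper semicontinuous with values in $[-\infty,\infty)$) is $\tilde{\mathcal{Q}}$-subharmonic in $\Omega$ if $J^+_{x_0}w\subset\tilde{\mathcal{Q}}$ for every $x_0\in\Omega$. *)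

theory Defs
  imports "HOL-Analysis.Analysis" "HOL-Library.Extended_Real"
begin

text \<open>Points of R^N are vectors of type real^'n (N = CARD('n)); symmetric
  N x N matrices are elements of real^'n^'n with transpose A = A.\<close>

definition sym_mat :: "real^'n^'n \<Rightarrow> bool" where
  "sym_mat A \<longleftrightarrow> transpose A = A"

definition lambda_max :: "real^'n^'n \<Rightarrow> real" where
  "lambda_max A = Max {mu. \<exists>v. v \<noteq> 0 \<and> A *v v = mu *\<^sub>R v}"

definition Qtilde :: "(real \<times> (real^'n^'n)) set" where
  "Qtilde = {(r, A). sym_mat A \<and> (r \<le> 0 \<or> lambda_max A \<ge> 0)}"

definition C2_near_with_hessian :: "(real^'n \<Rightarrow> real) \<Rightarrow> real^'n \<Rightarrow> real^'n^'n \<Rightarrow> bool" where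
  "C2_near_with_hessian phi x0 A \<longleftrightarrow>
     (\<exists>U g H. open U \<and> x0 \<in> U \<and>
        (\<forall>x\<in>U. (phi has_derivative (\<lambda>h. g x \<bullet> h)) (at x)) \<and>
        (\<forall>x\<in>U. (g has_derivative (\<lambda>h. H x *v h)) (at x)) \<and>
        continuous_on U H \<and> A = H x0)"

definition Jplus :: "(real^'n \<Rightarrow> ereal) \<Rightarrow> real^'n \<Rightarrow> (real \<times> (real^'n^'n)) set" where
  "Jplus w x0 = {(r, A). \<exists>phi. C2_near_with_hessian phi x0 A \<and>
       (\<exists>e>0. \<forall>y\<in>ball x0 e. w y \<le> ereal (phi y)) \<and>
       w x0 = ereal (phi x0) \<and> r = phi x0}"

definition usc_on :: "'a::topological_space set \<Rightarrow> ('a \<Rightarrow> ereal) \<Rightarrow> bool" where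
  "usc_on S w \<longleftrightarrow> (\<forall>x\<in>S. w x \<noteq> \<infinity> \<and>
      (\<forall>c. w x < c \<longrightarrow> eventually (\<lambda>y. w y < c) (at x within S)))"

definition Qtilde_subharmonic :: "(real^'n) set \<Rightarrow> (real^'n \<Rightarrow> ereal) \<Rightarrow> bool" where
  "Qtilde_subharmonic \<Omega> w \<longleftrightarrow> (\<forall>x0\<in>\<Omega>. Jplus w x0 \<subseteq> Qtilde)"

end

theory Submission
  imports Defs
begin

lemma mat_mult_vec: "(mat k :: real^'n^'n) *v v = k *\<^sub>R v"
proof -
  have "\<And>i. (\<Sum>j\<in>UNIV. (if i = j then k else 0) * v $ j) = k * v $ i"
  proof -
    fix i
    have "(\<Sum>j\<in>UNIV. (if i = j then k else 0) * v $ j) = (\<Sum>j\<in>UNIV. if i = j then k * v $ j else 0)"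
      by (rule sum.cong) auto
    then show "(\<Sum>j\<in>UNIV. (if i = j then k else 0) * v $ j) = k * v $ i" by simp
  qed
  then show ?thesis by (simp add: vec_eq_iff matrix_vector_mult_def mat_def)
qed

lemma lambda_max_mat: "lambda_max (mat k :: real^'n^'n) = k"
proof -
  obtain i :: 'n where True by simp
  have "{mu. \<exists>v. v \<noteq> 0 \<and> (mat k :: real^'n^'n) *v v = mu *\<^sub>R v} = {k}"
  proof safe
    fix mu and v :: "real^'n" assume "v \<noteq> 0" "mat k *v v = mu *\<^sub>R v"
    then have "k *\<^sub>R v = mu *\<^sub>R v" by (simp add: mat_mult_vec)
    with \<open>v \<noteq> 0\<close> show "mu = k" by (simp add: scaleR_cancel_right)
  next
    show "\<exists>v. v \<noteq> 0 \<and> (mat k :: real^'n^'n) *v v = k *\<^sub>R v"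
      by (rule exI[of _ "axis i 1"]) (simp add: mat_mult_vec)
  qed
  then show ?thesis unfolding lambda_max_def by simp
qed

lemma usc_add_cont:
  assumes "usc_on S w" "continuous_on S f"
  shows "usc_on S (\<lambda>y. w y + ereal (f y))"
  unfolding usc_on_def
proof (intro ballI conjI allI impI)
  fix x assume x: "x \<in> S"
  have wx: "w x \<noteq> \<infinity>" and ev: "\<And>c. w x < c \<Longrightarrow> eventually (\<lambda>y. w y < c) (at x within S)"
    using assms(1) x unfolding usc_on_def by auto
  show "w x + ereal (f x) \<noteq> \<infinity>" using wx by auto
  fix c assume c: "w x + ereal (f x) < c"
  have lim: "(f \<longlongrightarrow> f x) (at x within S)"
    using assms(2) x by (simp add: continuous_on_def)
  show "eventually (\<lambda>y. w y + ereal (f y) < c) (at x within S)"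
  proof (cases c)
    case PInf
    have "eventually (\<lambda>y. w y < \<infinity>) (at x within S)" using wx ev[of \<infinity>] by (simp add: less_PInf_Ex_of_nat)
    then show ?thesis by eventually_elim (use PInf in auto)
  next
    case MInf then show ?thesis using c by auto
  next
    case (real r)
    obtain d where d: "d > 0" "w x < ereal (r - f x - 2*d)"
    proof (cases "w x")
      case (real a)
      then have "a + f x < r" using c \<open>c = ereal r\<close> by auto
      then show ?thesis using real by (intro that[of "(r - f x - a)/3"]) (auto simp: field_simps)
    next
      case MInf then show ?thesis by (intro that[of 1]) auto
    next
      case PInf then show ?thesis using wx by auto
    qed
    have e1: "eventually (\<lambda>y. w y < ereal (r - f x - 2*d)) (at x within S)" using ev d by auto
    have e2: "eventually (\<lambda>y. dist (f y) (f x) < d) (at x within S)"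
      using lim d(1) by (rule tendstoD)
    from e1 e2 show ?thesis
    proof eventually_elim
      case (elim y)
      then have "f y < f x + d" by (simp add: dist_real_def abs_less_iff)
      show ?case
      proof (cases "w y")
        case (real b)
        then show ?thesis using elim \<open>f y < f x + d\<close> \<open>c = ereal r\<close> d by auto
      qed (use elim \<open>c = ereal r\<close> in auto)
    qed
  qed
qed

lemma usc_attains_max:
  assumes "usc_on S u" "compact S" "S \<noteq> {}"
  shows "\<exists>x\<in>S. \<forall>y\<in>S. u y \<le> u x"
proof (rule ccontr)
  assume "\<not> ?thesis"
  then have "\<forall>x\<in>S. \<exists>y\<in>S. u x < u y" by (auto simp: not_le)
  then obtain g where g: "\<And>x. x \<in> S \<Longrightarrow> g x \<in> S \<and> u x < u (g x)" by metis
  have "\<forall>x\<in>S. \<exists>T. open T \<and> x \<in> T \<and> (\<forall>y\<in>T. y \<in> S \<longrightarrow> u y < u (g x))"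
  proof
    fix x assume x: "x \<in> S"
    then have "eventually (\<lambda>y. u y < u (g x)) (at x within S)"
      using assms(1) g unfolding usc_on_def by auto
    then obtain T where "open T" "x \<in> T" "\<forall>y\<in>T. y \<in> S \<longrightarrow> y \<noteq> x \<longrightarrow> u y < u (g x)"
      unfolding eventually_at_topological by auto
    then show "\<exists>T. open T \<and> x \<in> T \<and> (\<forall>y\<in>T. y \<in> S \<longrightarrow> u y < u (g x))"
      using g[OF x] by (intro exI[of _ T]) auto
  qed
  then obtain Tf where Tf: "\<And>x. x \<in> S \<Longrightarrow> open (Tf x) \<and> x \<in> Tf x \<and> (\<forall>y\<in>Tf x. y \<in> S \<longrightarrow> u y < u (g x))"
    by metis
  have "S \<subseteq> (\<Union>x\<in>S. Tf x)" using Tf by auto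
  then obtain F where F: "F \<subseteq> S" "finite F" "S \<subseteq> (\<Union>x\<in>F. Tf x)"
    using compactE_image[OF assms(2), of S Tf] Tf by metis
  then have "F \<noteq> {}" using assms(3) by auto
  obtain xs where xs: "xs \<in> F" "\<forall>x\<in>F. u (g x) \<le> u (g xs)"
    using F(2) \<open>F \<noteq> {}\<close>
  proof -
    have "Max ((\<lambda>x. u (g x)) ` F) \<in> (\<lambda>x. u (g x)) ` F"
      using F(2) \<open>F \<noteq> {}\<close> by (intro Max_in) auto
    then obtain z where "z \<in> F" "u (g z) = Max ((\<lambda>x. u (g x)) ` F)" by auto
    then show ?thesis using F(2) by (intro that[of z]) auto
  qed
  have "g xs \<in> S" using g xs F by auto
  then obtain x where x: "x \<in> F" "g xs \<in> Tf x" using F by auto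
  then have "u (g xs) < u (g x)" using Tf F \<open>g xs \<in> S\<close> by auto
  with xs x show False by (meson not_le)
qed

theorem theorem4p1:
  fixes \<Omega> :: "(real^'n) set" and w :: "real^'n \<Rightarrow> ereal"
  assumes "bounded \<Omega>" and "open \<Omega>" and "connected \<Omega>"
    and "usc_on (closure \<Omega>) w"
    and "Qtilde_subharmonic \<Omega> w"
    and "\<forall>x\<in>frontier \<Omega>. w x \<le> 0"
  shows "\<forall>x\<in>\<Omega>. w x \<le> 0"
proof (rule ccontr)
  assume "\<not> ?thesis"
  then obtain x1 where x1: "x1 \<in> \<Omega>" "w x1 > 0" by (auto simp: not_le)
  have x1c: "x1 \<in> closure \<Omega>" using x1 closure_subset by auto
  have "w x1 \<noteq> \<infinity>" using assms(4) x1c unfolding usc_on_def by auto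
  then obtain m where m: "w x1 = ereal m" "m > 0" using x1(2)
    by (cases "w x1") auto
  have bc: "bounded (closure \<Omega>)" using assms(1) by (rule bounded_closure)
  obtain B where B: "B > 0" "\<forall>y\<in>closure \<Omega>. norm (y - x1) \<le> B"
    using bounded_pos[THEN iffD1, OF bounded_translation_minus[OF bc, of x1]] by auto
  define eps where "eps = m / (2 * (B^2 + 1))"
  have eps: "eps > 0" using m B unfolding eps_def by (intro divide_pos_pos) (auto simp: add_pos_nonneg)
  define q where "q = (\<lambda>y. (y - x1) \<bullet> (y - x1))"
  have qB: "eps * q y < m / 2" if "y \<in> closure \<Omega>" for y
  proof -
    have "q y = norm (y - x1)^2" by (simp add: q_def power2_norm_eq_inner)
    also have "\<dots> \<le> B^2" using B that by (simp add: power_mono)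
    finally have "eps * q y \<le> eps * B^2" using eps by simp
    also have "\<dots> < m / 2"
    proof -
      have "(B::real)^2 \<ge> 0" by simp
      then have p: "2 * ((B::real)^2 + 1) > 0" by (smt (verit) zero_le_power2)
      have "eps * B^2 = (m * B^2) / (2 * (B^2 + 1))" by (simp add: eps_def)
      also have "\<dots> < (m * (B^2 + 1)) / (2 * (B^2 + 1))"
        using p m by (intro divide_strict_right_mono) auto
      also have "\<dots> = m / 2"
        using p by (intro nonzero_mult_divide_mult_cancel_right) auto
      finally show ?thesis .
    qed
    finally show ?thesis .
  qed
  have q0: "q y \<ge> 0" for y by (simp add: q_def)
  define u where "u = (\<lambda>y. w y + ereal (eps * q y))"
  have "continuous_on (closure \<Omega>) (\<lambda>y. eps * q y)"
    unfolding q_def by (intro continuous_intros)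
  then have uusc: "usc_on (closure \<Omega>) u" unfolding u_def by (rule usc_add_cont[OF assms(4)])
  have cc: "compact (closure \<Omega>)" using assms(1) by (simp add: compact_closure)
  have ne: "closure \<Omega> \<noteq> {}" using x1c by auto
  from usc_attains_max[OF uusc cc ne]
  obtain x0 where x0: "x0 \<in> closure \<Omega>" "\<forall>y\<in>closure \<Omega>. u y \<le> u x0"
    by (elim bexE) 
  have ux1: "u x1 = ereal m" using m by (simp add: u_def q_def)
  have "u x1 \<le> u x0" using x0(2) x1c by (rule bspec)
  then have ux0: "u x0 \<ge> ereal m" using ux1 by simp
  have "x0 \<notin> frontier \<Omega>"
  proof
    assume "x0 \<in> frontier \<Omega>"
    then have "w x0 \<le> 0" using assms(6) by auto
    then have "u x0 \<le> ereal (eps * q x0)" unfolding u_def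
      using add_right_mono[OF \<open>w x0 \<le> 0\<close>, of "ereal (eps * q x0)"] by simp
    also have "\<dots> < ereal m" using qB[OF x0(1)] m by simp
    finally show False using ux0 by simp
  qed
  then have x0O: "x0 \<in> \<Omega>" using x0(1) assms(2) by (simp add: frontier_def interior_open)
  have "w x0 \<noteq> \<infinity>" using assms(4) x0(1) unfolding usc_on_def by auto
  moreover have "w x0 \<noteq> -\<infinity>" using ux0 by (auto simp: u_def)
  ultimately obtain a where a: "w x0 = ereal a" by (cases "w x0") auto
  have ineq: "a + eps * q x0 \<ge> m" using ux0 by (simp add: u_def a)
  then have apos: "a > 0" using qB[OF x0(1)] m by linarith
  define c where "c = a + eps * q x0"
  define phi where "phi = (\<lambda>y. c - eps * q y)"
  define H :: "real^'n^'n" where "H = mat (-2 * eps)"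
  have D1: "(phi has_derivative (\<lambda>h. ((-2 * eps) *\<^sub>R (x - x1)) \<bullet> h)) (at x)" for x
  proof -
    have "((\<lambda>y. (y - x1) \<bullet> (y - x1)) has_derivative (\<lambda>h. (x - x1) \<bullet> (h - 0) + (h - 0) \<bullet> (x - x1))) (at x)"
      by (rule has_derivative_inner; intro has_derivative_diff has_derivative_ident has_derivative_const)
    then have "((\<lambda>y. c - eps * ((y - x1) \<bullet> (y - x1))) has_derivative (\<lambda>h. 0 - eps * ((x - x1) \<bullet> (h - 0) + (h - 0) \<bullet> (x - x1)))) (at x)"
      by (intro has_derivative_diff has_derivative_const has_derivative_mult_right)
    moreover have "(\<lambda>h. 0 - eps * ((x - x1) \<bullet> (h - 0) + (h - 0) \<bullet> (x - x1))) = (\<lambda>h. ((-2 * eps) *\<^sub>R (x - x1)) \<bullet> h)"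
      by (rule ext) (simp add: inner_commute[of _ "x - x1"])
    ultimately show ?thesis by (simp add: phi_def q_def)
  qed
  have D2: "((\<lambda>y. (-2 * eps) *\<^sub>R (y - x1)) has_derivative (\<lambda>h. H *v h)) (at x)" for x
  proof -
    have "((\<lambda>y. (-2 * eps) *\<^sub>R (y - x1)) has_derivative (\<lambda>h. (-2 * eps) *\<^sub>R (h - 0))) (at x)"
      by (intro has_derivative_scaleR_right has_derivative_diff has_derivative_ident has_derivative_const)
    then show ?thesis
      by (simp add: H_def mat_mult_vec)
  qed
  have D3: "continuous_on UNIV (\<lambda>_::real^'n. H)" by (rule continuous_on_const)
  have C2: "C2_near_with_hessian phi x0 H"
    unfolding C2_near_with_hessian_def
    apply (rule exI[of _ UNIV])
    apply (rule exI[of _ "\<lambda>y. (-2 * eps) *\<^sub>R (y - x1)"])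
    apply (rule exI[of _ "\<lambda>_. H"])
    by (intro conjI ballI open_UNIV UNIV_I D1 D2 D3 refl)
  obtain e where e: "e > 0" "ball x0 e \<subseteq> \<Omega>" using assms(2) x0O open_contains_ball by blast
  have dom: "\<forall>y\<in>ball x0 e. w y \<le> ereal (phi y)"
  proof
    fix y assume "y \<in> ball x0 e"
    then have "y \<in> \<Omega>" using e by blast
    then have yc: "y \<in> closure \<Omega>" using closure_subset by blast
    then have uy: "u y \<le> ereal c" using x0 a by (simp add: c_def u_def)
    show "w y \<le> ereal (phi y)"
    proof (cases "w y")
      case (real b)
      then show ?thesis using uy by (simp add: u_def phi_def)
    next
      case PInf then show ?thesis using assms(4) yc unfolding usc_on_def by auto
    qed auto
  qed
  have "w x0 = ereal (phi x0)" using a by (simp add: phi_def c_def)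
  then have "(phi x0, H) \<in> Jplus w x0" unfolding Jplus_def using C2 e dom by blast
  then have "(phi x0, H) \<in> Qtilde" using assms(5) x0O unfolding Qtilde_subharmonic_def by blast
  then have "phi x0 \<le> 0 \<or> lambda_max H \<ge> 0" unfolding Qtilde_def by auto
  moreover have "phi x0 = a" by (simp add: phi_def c_def)
  moreover have "lambda_max H = -2 * eps" by (simp add: H_def lambda_max_mat)
  ultimately show False using apos eps by auto
qed

end
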